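(* Let $p\in\{1,2\}$ and assume the measures $\mu^1,\dots,\mu^N$ are not all equal. Let $\pi^{ij}$ ($1\le i,j\le N$) be the plans of the pairwise algorithm, let $m^i_k\in\mathbb{R}^d$ ($i=1,\dots,N$, $k=1,\dots,n_i$) be arbitrary points, and let $\tilde\nu\coloneqq\sum_{i=1}^N\lambda_i\sum_{k=1}^{n_i}\mu^i_k\delta(m^i_k)$. Then for any optimal barycenter $\hat\nu$ (minimizer of $\Psi_p$), $$\frac{\Psi_p(\tilde\nu)}{\Psi_p(\hat\nu)}\le\frac{\sum_{i=1}^N\lambda_i\sum_{j=1}^N\lambda_j\sum_{k=1}^{n_i}\sum_{l=1}^{n_j}\pi^{ij}_{k,l}\|m^i_k-x^j_l\|^p}{\sum_{1\le i<j\le N}\lambda_i\lambda_j\mathcal{W}_p^p(\mu^i,\mu^j)}.$$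
   Context: $\|\cdot\|$ is the Euclidean norm on $\mathbb{R}^d$. For finitely supported probability measures $\mu,\nu$ on $\mathbb{R}^d$, $\mathcal{W}_p^p(\mu,\nu)\coloneqq\min_{\pi\in\Pi(\mu,\nu)}\int\|x-y\|^p\,d\pi$, with $\Pi(\mu,\nu)$ the set of couplings. Fix $N\ge2$, $\lambda\in\Delta_N\coloneqq\{\lambda\in(0,1)^N:\sum_i\lambda_i=1\}$, and discrete probability measures $\mu^i=\sum_{l=1}^{n_i}\mu^i_l\delta(x^i_l)$, $i=1,\dots,N$, with positive weights and pairwise distinct points for each $i$. $\Psi_p(\nu)\coloneqq\sum_{i=1}^N\lambda_i\mathcal{W}_p^p(\nu,\mu^i)$. Plans of the pairwise algorithm: $\pi^{ii}\coloneqq\sum_k\mu^i_k\delta(x^i_k,x^i_k)$ (so $\pi^{ii}_{k,l}=\mu^i_k$ if $l=k$, else $0$); for $i<j$, $\pi^{ij}=\sum_{k,l}\pi^{ij}_{k,l}\delta(x^i_k,x^j_l)\in\Pi(\mu^i,\mu^j)$ is an optimal plan for cost $\|x-y\|^p$; and $\pi^{ji}_{l,k}\coloneqq\pi^{ij}_{k,l}$. *)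

theory Defs
  imports "HOL-Analysis.Analysis"
begin

text \<open>Finitely supported (probability) measures on a Euclidean space are represented
by their mass functions.\<close>

definition supp :: "('b \<Rightarrow> real) \<Rightarrow> 'b set" where
  "supp f = {z. f z \<noteq> 0}"

definition fsprob :: "('a \<Rightarrow> real) \<Rightarrow> bool" where
  "fsprob \<nu> \<longleftrightarrow> finite (supp \<nu>) \<and> (\<forall>y. 0 \<le> \<nu> y) \<and> sum \<nu> (supp \<nu>) = 1"

definition is_coupling :: "('a \<Rightarrow> real) \<Rightarrow> ('a \<Rightarrow> real) \<Rightarrow> ('a \<times> 'a \<Rightarrow> real) \<Rightarrow> bool" where
  "is_coupling \<mu> \<nu> \<gamma> \<longleftrightarrow> finite (supp \<gamma>) \<and> (\<forall>z. 0 \<le> \<gamma> z)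
     \<and> (\<forall>x. (\<Sum>z\<in>{z\<in>supp \<gamma>. fst z = x}. \<gamma> z) = \<mu> x)
     \<and> (\<forall>y. (\<Sum>z\<in>{z\<in>supp \<gamma>. snd z = y}. \<gamma> z) = \<nu> y)"

definition transport_cost :: "nat \<Rightarrow> ('a::real_normed_vector \<times> 'a \<Rightarrow> real) \<Rightarrow> real" where
  "transport_cost p \<gamma> = (\<Sum>z\<in>supp \<gamma>. \<gamma> z * norm (fst z - snd z) ^ p)"

definition Wpp :: "nat \<Rightarrow> ('a::real_normed_vector \<Rightarrow> real) \<Rightarrow> ('a \<Rightarrow> real) \<Rightarrow> real" where
  "Wpp p \<mu> \<nu> = Inf {transport_cost p \<gamma> | \<gamma>. is_coupling \<mu> \<nu> \<gamma>}"

definition dmeas :: "nat \<Rightarrow> (nat \<Rightarrow> real) \<Rightarrow> (nat \<Rightarrow> 'a) \<Rightarrow> 'a \<Rightarrow> real" where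
  "dmeas n w x = (\<lambda>y. \<Sum>k\<in>{1..n}. if x k = y then w k else 0)"

definition Psi :: "nat \<Rightarrow> nat \<Rightarrow> (nat \<Rightarrow> real) \<Rightarrow> (nat \<Rightarrow> 'a::real_normed_vector \<Rightarrow> real)
    \<Rightarrow> ('a \<Rightarrow> real) \<Rightarrow> real" where
  "Psi p N lam mu \<nu> = (\<Sum>i\<in>{1..N}. lam i * Wpp p \<nu> (mu i))"

end

theory Submission
  imports Defs
begin


lemma gen_sum:
  fixes I :: "'i set" and g :: "'i \<Rightarrow> real" and f1 f2 :: "'i \<Rightarrow> 'a"
  assumes fin: "finite I"
  shows "(\<Sum>z\<in>supp (\<lambda>z. \<Sum>t\<in>I. if (f1 t, f2 t) = z then g t else 0).
            (\<Sum>t\<in>I. if (f1 t, f2 t) = z then g t else 0) * h z)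
         = (\<Sum>t\<in>I. g t * h (f1 t, f2 t))"
proof -
  define \<gamma> where "\<gamma> = (\<lambda>z. \<Sum>t\<in>I. if (f1 t, f2 t) = z then g t else 0)"
  define S where "S = (\<lambda>t. (f1 t, f2 t)) ` I"
  have finS: "finite S" using fin by (simp add: S_def)
  have sub: "supp \<gamma> \<subseteq> S"
  proof
    fix z assume "z \<in> supp \<gamma>"
    hence "\<gamma> z \<noteq> 0" by (simp add: supp_def)
    have "\<exists>t\<in>I. (if (f1 t, f2 t) = z then g t else 0) \<noteq> 0"
    proof (rule ccontr)
      assume "\<not> (\<exists>t\<in>I. (if (f1 t, f2 t) = z then g t else 0) \<noteq> 0)"
      hence "\<gamma> z = 0" unfolding \<gamma>_def by (intro sum.neutral) blast
      thus False using \<open>\<gamma> z \<noteq> 0\<close> by simp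
    qed
    then obtain t where "t \<in> I" "(f1 t, f2 t) = z" by (auto split: if_splits)
    thus "z \<in> S" unfolding S_def by force
  qed
  have "(\<Sum>z\<in>supp \<gamma>. \<gamma> z * h z) = (\<Sum>z\<in>S. \<gamma> z * h z)"
    by (rule sum.mono_neutral_left[OF finS sub]) (auto simp: supp_def)
  also have "\<dots> = (\<Sum>z\<in>S. \<Sum>t\<in>I. if (f1 t, f2 t) = z then g t * h z else 0)"
    unfolding \<gamma>_def sum_distrib_right by (intro sum.cong) auto
  also have "\<dots> = (\<Sum>t\<in>I. \<Sum>z\<in>S. if (f1 t, f2 t) = z then g t * h z else 0)"
    by (rule sum.swap)
  also have "\<dots> = (\<Sum>t\<in>I. g t * h (f1 t, f2 t))"
    using finS by (intro sum.cong) (auto simp: S_def)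
  finally show ?thesis unfolding \<gamma>_def .
qed

lemma gen_coupling:
  fixes I :: "'i set" and g :: "'i \<Rightarrow> real" and f1 f2 :: "'i \<Rightarrow> 'a::real_normed_vector"
  assumes fin: "finite I" and nn: "\<forall>t\<in>I. 0 \<le> g t"
  shows "is_coupling (\<lambda>a. \<Sum>t\<in>I. if f1 t = a then g t else 0) (\<lambda>b. \<Sum>t\<in>I. if f2 t = b then g t else 0)
           (\<lambda>z. \<Sum>t\<in>I. if (f1 t, f2 t) = z then g t else 0)"
    and "transport_cost p (\<lambda>z. \<Sum>t\<in>I. if (f1 t, f2 t) = z then g t else 0)
           = (\<Sum>t\<in>I. g t * norm (f1 t - f2 t) ^ p)"
proof -
  define \<gamma> where "\<gamma> = (\<lambda>z. \<Sum>t\<in>I. if (f1 t, f2 t) = z then g t else 0)"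
  have finS: "finite (supp \<gamma>)"
  proof (rule finite_subset)
    show "supp \<gamma> \<subseteq> (\<lambda>t. (f1 t, f2 t)) ` I"
    proof
      fix z assume "z \<in> supp \<gamma>"
      hence "\<gamma> z \<noteq> 0" by (simp add: supp_def)
      have "\<exists>t\<in>I. (if (f1 t, f2 t) = z then g t else 0) \<noteq> 0"
      proof (rule ccontr)
        assume "\<not> (\<exists>t\<in>I. (if (f1 t, f2 t) = z then g t else 0) \<noteq> 0)"
        hence "\<gamma> z = 0" unfolding \<gamma>_def by (intro sum.neutral) blast
        thus False using \<open>\<gamma> z \<noteq> 0\<close> by simp
      qed
      then obtain t where "t \<in> I" "(f1 t, f2 t) = z" by (auto split: if_splits)
      thus "z \<in> (\<lambda>t. (f1 t, f2 t)) ` I" by force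
    qed
  qed (use fin in auto)
  have key: "\<And>h. (\<Sum>z\<in>supp \<gamma>. \<gamma> z * h z) = (\<Sum>t\<in>I. g t * h (f1 t, f2 t))"
    unfolding \<gamma>_def by (rule gen_sum[OF fin])
  have m1: "(\<Sum>z\<in>{z\<in>supp \<gamma>. fst z = a}. \<gamma> z) = (\<Sum>t\<in>I. if f1 t = a then g t else 0)" for a
  proof -
    have "(\<Sum>z\<in>{z\<in>supp \<gamma>. fst z = a}. \<gamma> z) = (\<Sum>z\<in>supp \<gamma>. \<gamma> z * (if fst z = a then 1 else 0))"
      using finS by (auto simp: sum.inter_filter intro!: sum.cong)
    also have "\<dots> = (\<Sum>t\<in>I. if f1 t = a then g t else 0)"
      unfolding key by (intro sum.cong) auto
    finally show ?thesis .
  qed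
  have m2: "(\<Sum>z\<in>{z\<in>supp \<gamma>. snd z = a}. \<gamma> z) = (\<Sum>t\<in>I. if f2 t = a then g t else 0)" for a
  proof -
    have "(\<Sum>z\<in>{z\<in>supp \<gamma>. snd z = a}. \<gamma> z) = (\<Sum>z\<in>supp \<gamma>. \<gamma> z * (if snd z = a then 1 else 0))"
      using finS by (auto simp: sum.inter_filter intro!: sum.cong)
    also have "\<dots> = (\<Sum>t\<in>I. if f2 t = a then g t else 0)"
      unfolding key by (intro sum.cong) auto
    finally show ?thesis .
  qed
  have "0 \<le> \<gamma> z" for z unfolding \<gamma>_def using nn by (intro sum_nonneg) auto
  thus "is_coupling (\<lambda>a. \<Sum>t\<in>I. if f1 t = a then g t else 0) (\<lambda>b. \<Sum>t\<in>I. if f2 t = b then g t else 0)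
           (\<lambda>z. \<Sum>t\<in>I. if (f1 t, f2 t) = z then g t else 0)"
    using finS m1 m2 unfolding is_coupling_def \<gamma>_def[symmetric] by auto
  show "transport_cost p (\<lambda>z. \<Sum>t\<in>I. if (f1 t, f2 t) = z then g t else 0)
           = (\<Sum>t\<in>I. g t * norm (f1 t - f2 t) ^ p)"
    unfolding transport_cost_def \<gamma>_def[symmetric] key by simp
qed


lemma coup_nn: "is_coupling \<mu> \<nu> \<gamma> \<Longrightarrow> 0 \<le> \<gamma> z"
  unfolding is_coupling_def by blast

lemma tc_nonneg: "is_coupling \<mu> \<nu> \<gamma> \<Longrightarrow> 0 \<le> transport_cost p \<gamma>"
  unfolding transport_cost_def is_coupling_def by (auto intro!: sum_nonneg)

lemma Wpp_le: "is_coupling \<mu> \<nu> \<gamma> \<Longrightarrow> Wpp p \<mu> \<nu> \<le> transport_cost p \<gamma>"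
  unfolding Wpp_def
  by (rule cInf_lower) (auto simp: bdd_below_def intro!: exI[of _ 0] tc_nonneg)

lemma sum_sigma3:
  assumes "finite A" "\<forall>x\<in>A. finite (B x) \<and> finite (C x)"
  shows "(\<Sum>t\<in>(SIGMA x:A. B x \<times> C x). F t) = (\<Sum>x\<in>A. \<Sum>b\<in>B x. \<Sum>c\<in>C x. F (x,(b,c)))"
proof -
  have "(\<Sum>x\<in>A. \<Sum>b\<in>B x. \<Sum>c\<in>C x. F (x,(b,c))) = (\<Sum>x\<in>A. \<Sum>u\<in>B x \<times> C x. F (x,u))"
    by (intro sum.cong refl) (simp add: sum.cartesian_product split_def)
  also have "\<dots> = (\<Sum>t\<in>(SIGMA x:A. B x \<times> C x). F t)"
    using assms by (subst sum.Sigma) (auto simp: split_def)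
  finally show ?thesis by simp
qed

definition fib :: "('a \<times> 'a \<Rightarrow> real) \<Rightarrow> 'a \<Rightarrow> ('a \<times> 'a) set" where
  "fib \<gamma> y = {z\<in>supp \<gamma>. fst z = y}"

lemma coup_basic:
  assumes c: "is_coupling \<nu> \<mu> \<gamma>" and f: "fsprob \<nu>"
  shows "finite (supp \<gamma>)" and "\<And>z. z \<in> supp \<gamma> \<Longrightarrow> 0 < \<gamma> z"
    and "\<And>z. z \<in> supp \<gamma> \<Longrightarrow> fst z \<in> supp \<nu>"
    and "\<And>y. (\<Sum>z\<in>fib \<gamma> y. \<gamma> z) = \<nu> y"
    and "\<And>y. finite (fib \<gamma> y)"
    and "\<And>h. (\<Sum>z\<in>supp \<gamma>. h z) = (\<Sum>y\<in>supp \<nu>. \<Sum>z\<in>fib \<gamma> y. h z)"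
proof -
  show fs: "finite (supp \<gamma>)" using c by (simp add: is_coupling_def)
  show pos: "\<And>z. z \<in> supp \<gamma> \<Longrightarrow> 0 < \<gamma> z"
  proof -
    fix z assume "z \<in> supp \<gamma>"
    hence "\<gamma> z \<noteq> 0" by (simp add: supp_def)
    moreover have "0 \<le> \<gamma> z" using c by (rule coup_nn)
    ultimately show "0 < \<gamma> z" by linarith
  qed
  show fsum: "\<And>y. (\<Sum>z\<in>fib \<gamma> y. \<gamma> z) = \<nu> y" using c by (simp add: is_coupling_def fib_def)
  show ffin: "\<And>y. finite (fib \<gamma> y)" using fs by (simp add: fib_def)
  show fstin: "\<And>z. z \<in> supp \<gamma> \<Longrightarrow> fst z \<in> supp \<nu>"
  proof -
    fix z assume z: "z \<in> supp \<gamma>"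
    have "\<gamma> z \<le> (\<Sum>z\<in>fib \<gamma> (fst z). \<gamma> z)"
      by (rule member_le_sum) (use z ffin pos in \<open>auto simp: fib_def less_imp_le\<close>)
    hence "0 < \<nu> (fst z)" using fsum[of "fst z"] pos[OF z] by linarith
    thus "fst z \<in> supp \<nu>" by (simp add: supp_def)
  qed
  fix h
  have "finite (supp \<nu>)" using f by (simp add: fsprob_def)
  thus "(\<Sum>z\<in>supp \<gamma>. h z) = (\<Sum>y\<in>supp \<nu>. \<Sum>z\<in>fib \<gamma> y. h z)"
  proof -
    have "fst ` supp \<gamma> \<subseteq> supp \<nu>" using fstin by blast
    from sum.group[OF fs \<open>finite (supp \<nu>)\<close> this, of h] show ?thesis unfolding fib_def by simp
  qed
qed

definition Gl :: "nat \<Rightarrow> ('a::real_normed_vector \<Rightarrow> real) \<Rightarrow> ('a \<times> 'a \<Rightarrow> real) \<Rightarrow> ('a \<times> 'a \<Rightarrow> real) \<Rightarrow> real" where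
  "Gl p \<nu> \<gamma>1 \<gamma>2 = (\<Sum>y\<in>supp \<nu>. \<Sum>z\<in>fib \<gamma>1 y. \<Sum>z'\<in>fib \<gamma>2 y.
       \<gamma>1 z * \<gamma>2 z' / \<nu> y * norm (snd z - snd z') ^ p)"

lemma glue:
  fixes \<nu> :: "'a::real_normed_vector \<Rightarrow> real"
  assumes f: "fsprob \<nu>" and c1: "is_coupling \<nu> \<mu>1 \<gamma>1" and c2: "is_coupling \<nu> \<mu>2 \<gamma>2"
  shows "Wpp p \<mu>1 \<mu>2 \<le> Gl p \<nu> \<gamma>1 \<gamma>2"
proof -
  define Y where "Y = supp \<nu>"
  have finY: "finite Y" using f by (simp add: fsprob_def Y_def)
  have nnu: "\<nu> y \<noteq> 0" if "y \<in> Y" for y using that by (simp add: Y_def supp_def)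
  define I where "I = (SIGMA y:Y. fib \<gamma>1 y \<times> fib \<gamma>2 y)"
  define g where "g = (\<lambda>t::'a \<times> ('a \<times> 'a) \<times> ('a \<times> 'a). \<gamma>1 (fst (snd t)) * \<gamma>2 (snd (snd t)) / \<nu> (fst t))"
  define f1 where "f1 = (\<lambda>t::'a \<times> ('a \<times> 'a) \<times> ('a \<times> 'a). snd (fst (snd t)))"
  define f2 where "f2 = (\<lambda>t::'a \<times> ('a \<times> 'a) \<times> ('a \<times> 'a). snd (snd (snd t)))"
  note B1 = coup_basic[OF c1 f] and B2 = coup_basic[OF c2 f]
  have finI: "finite I" unfolding I_def using finY B1(5) B2(5) by auto
  have S3: "\<And>F. (\<Sum>t\<in>I. F t) = (\<Sum>y\<in>Y. \<Sum>z\<in>fib \<gamma>1 y. \<Sum>z'\<in>fib \<gamma>2 y. F (y,(z,z')))"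
    unfolding I_def by (rule sum_sigma3) (use finY B1(5) B2(5) in auto)
  have nn: "\<forall>t\<in>I. 0 \<le> g t"
  proof
    fix t assume "t \<in> I"
    then obtain y z z' where t: "t = (y,(z,z'))" "y \<in> Y" "z \<in> fib \<gamma>1 y" "z' \<in> fib \<gamma>2 y"
      unfolding I_def by auto
    have "0 \<le> \<nu> y" using f by (simp add: fsprob_def)
    moreover have "0 \<le> \<gamma>1 z" "0 \<le> \<gamma>2 z'" using c1 c2 by (auto intro: coup_nn)
    ultimately show "0 \<le> g t" using t unfolding g_def by simp
  qed
  note GC1 = gen_coupling(1)[OF finI nn, of f1 f2] and GC2 = gen_coupling(2)[OF finI nn]
  have M1: "(\<lambda>a. \<Sum>t\<in>I. if f1 t = a then g t else 0) = \<mu>1"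
  proof
    fix a
    have "(\<Sum>t\<in>I. if f1 t = a then g t else 0)
        = (\<Sum>y\<in>Y. \<Sum>z\<in>fib \<gamma>1 y. (if snd z = a then \<gamma>1 z / \<nu> y else 0) * (\<Sum>z'\<in>fib \<gamma>2 y. \<gamma>2 z'))"
      unfolding S3 f1_def g_def by (intro sum.cong refl) (auto simp: sum_distrib_left)
    also have "\<dots> = (\<Sum>y\<in>Y. \<Sum>z\<in>fib \<gamma>1 y. (if snd z = a then \<gamma>1 z else 0))"
      using nnu by (intro sum.cong refl) (auto simp: B2(4))
    also have "\<dots> = (\<Sum>z\<in>supp \<gamma>1. (if snd z = a then \<gamma>1 z else 0))"
      unfolding Y_def B1(6) ..
    also have "\<dots> = \<mu>1 a" using c1 B1(1) by (simp add: is_coupling_def sum.inter_filter[symmetric])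
    finally show "(\<Sum>t\<in>I. if f1 t = a then g t else 0) = \<mu>1 a" .
  qed
  have M2: "(\<lambda>a. \<Sum>t\<in>I. if f2 t = a then g t else 0) = \<mu>2"
  proof
    fix a
    have "(\<Sum>t\<in>I. if f2 t = a then g t else 0)
        = (\<Sum>y\<in>Y. \<Sum>z\<in>fib \<gamma>1 y. \<Sum>z'\<in>fib \<gamma>2 y. if snd z' = a then \<gamma>1 z * \<gamma>2 z' / \<nu> y else 0)"
      unfolding S3 f2_def g_def by (intro sum.cong refl) auto
    also have "\<dots> = (\<Sum>y\<in>Y. \<Sum>z'\<in>fib \<gamma>2 y. \<Sum>z\<in>fib \<gamma>1 y. if snd z' = a then \<gamma>1 z * \<gamma>2 z' / \<nu> y else 0)"
      by (rule sum.cong[OF refl], rule sum.swap)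
    also have "\<dots> = (\<Sum>y\<in>Y. \<Sum>z'\<in>fib \<gamma>2 y. (if snd z' = a then \<gamma>2 z' / \<nu> y else 0) * (\<Sum>z\<in>fib \<gamma>1 y. \<gamma>1 z))"
      by (intro sum.cong refl) (auto simp: sum_distrib_left intro!: sum.cong)
    also have "\<dots> = (\<Sum>y\<in>Y. \<Sum>z\<in>fib \<gamma>2 y. (if snd z = a then \<gamma>2 z else 0))"
      using nnu by (intro sum.cong refl) (auto simp: B1(4))
    also have "\<dots> = (\<Sum>z\<in>supp \<gamma>2. (if snd z = a then \<gamma>2 z else 0))"
      unfolding Y_def B2(6) ..
    also have "\<dots> = \<mu>2 a" using c2 B2(1) by (simp add: is_coupling_def sum.inter_filter[symmetric])
    finally show "(\<Sum>t\<in>I. if f2 t = a then g t else 0) = \<mu>2 a" .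
  qed
  have "Wpp p \<mu>1 \<mu>2 \<le> transport_cost p (\<lambda>z. \<Sum>t\<in>I. if (f1 t, f2 t) = z then g t else 0)"
    using Wpp_le GC1 unfolding M1 M2 by blast
  also have "\<dots> = (\<Sum>t\<in>I. g t * norm (f1 t - f2 t) ^ p)" by (rule GC2)
  also have "\<dots> = Gl p \<nu> \<gamma>1 \<gamma>2"
    unfolding S3 Gl_def Y_def[symmetric] f1_def f2_def g_def by (intro sum.cong refl) auto
  finally show ?thesis .
qed


definition U :: "('a::real_vector \<times> 'a \<Rightarrow> real) \<Rightarrow> 'a \<Rightarrow> 'a" where
  "U \<gamma> y = (\<Sum>z\<in>fib \<gamma> y. \<gamma> z *\<^sub>R (snd z - y))"

definition cc :: "nat \<Rightarrow> real" where "cc p = (if p = 2 then 2 else 0)"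

lemma pt_ineq:
  fixes a b y :: "'a::real_inner"
  assumes "p \<in> {1,2}"
  shows "norm (a - b) ^ p \<le> norm (a - y) ^ p + norm (b - y) ^ p - cc p * inner (a - y) (b - y)"
proof (cases "p = 1")
  case True
  have "norm (a - b) = norm ((a - y) - (b - y))" by simp
  also have "\<dots> \<le> norm (a - y) + norm (b - y)" by (rule norm_triangle_ineq4)
  finally show ?thesis using True by (simp add: cc_def)
next
  case False
  hence p2: "p = 2" using assms by auto
  have gen: "norm (u - v) ^ 2 = norm u ^ 2 + norm v ^ 2 - 2 * inner u v" for u v :: 'a
    by (simp add: power2_norm_eq_inner inner_diff_left inner_diff_right inner_commute)
  have "a - b = (a - y) - (b - y)" by simp
  hence "norm (a - b) ^ 2 = norm (a - y) ^ 2 + norm (b - y) ^ 2 - 2 * inner (a - y) (b - y)"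
    using gen by metis
  thus ?thesis using p2 by (simp add: cc_def)
qed

lemma glue_bound:
  fixes \<nu> :: "'a::real_inner \<Rightarrow> real"
  assumes f: "fsprob \<nu>" and c1: "is_coupling \<nu> \<mu>1 \<gamma>1" and c2: "is_coupling \<nu> \<mu>2 \<gamma>2"
    and p: "p \<in> {1,2}"
  shows "Gl p \<nu> \<gamma>1 \<gamma>2 \<le> transport_cost p \<gamma>1 + transport_cost p \<gamma>2
           - cc p * (\<Sum>y\<in>supp \<nu>. inner (U \<gamma>1 y) (U \<gamma>2 y) / \<nu> y)"
proof -
  define Y where "Y = supp \<nu>"
  note B1 = coup_basic[OF c1 f] and B2 = coup_basic[OF c2 f]
  have nu_nn: "0 \<le> \<nu> y" for y using f by (simp add: fsprob_def)
  have nnu: "\<nu> y \<noteq> 0" if "y \<in> Y" for y using that by (simp add: Y_def supp_def)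
  have g1: "0 \<le> \<gamma>1 z" for z using c1 by (rule coup_nn)
  have g2: "0 \<le> \<gamma>2 z" for z using c2 by (rule coup_nn)
  define X1 where "X1 = (\<lambda>z::'a\<times>'a. norm (snd z - fst z) ^ p)"
  define X2 where "X2 = (\<lambda>z::'a\<times>'a. norm (snd z - fst z) ^ p)"
  define k where "k = cc p"
  have step1: "Gl p \<nu> \<gamma>1 \<gamma>2 \<le> (\<Sum>y\<in>Y. \<Sum>z\<in>fib \<gamma>1 y. \<Sum>z'\<in>fib \<gamma>2 y.
       \<gamma>1 z * \<gamma>2 z' / \<nu> y * (X1 z + X2 z' - k * inner (snd z - y) (snd z' - y)))"
    unfolding Gl_def Y_def[symmetric]
  proof (intro sum_mono mult_left_mono)
    fix y z z' assume "z \<in> fib \<gamma>1 y" "z' \<in> fib \<gamma>2 y"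
    hence "fst z = y" "fst z' = y" by (auto simp: fib_def)
    thus "norm (snd z - snd z') ^ p \<le> X1 z + X2 z' - k * inner (snd z - y) (snd z' - y)"
      using pt_ineq[OF p] unfolding X1_def X2_def k_def by simp
    show "0 \<le> \<gamma>1 z * \<gamma>2 z' / \<nu> y" using g1 g2 nu_nn by simp
  qed
  have E: "(\<Sum>z\<in>fib \<gamma>1 y. \<Sum>z'\<in>fib \<gamma>2 y.
       \<gamma>1 z * \<gamma>2 z' / \<nu> y * (X1 z + X2 z' - k * inner (snd z - y) (snd z' - y)))
     = (\<Sum>z\<in>fib \<gamma>1 y. \<gamma>1 z * X1 z) + (\<Sum>z'\<in>fib \<gamma>2 y. \<gamma>2 z' * X2 z')
        - k * (inner (U \<gamma>1 y) (U \<gamma>2 y) / \<nu> y)" if y: "y \<in> Y" for y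
  proof -
    define A where "A = fib \<gamma>1 y"
    define B where "B = fib \<gamma>2 y"
    define q where "q = \<nu> y"
    have q: "q \<noteq> 0" using nnu[OF y] by (simp add: q_def)
    have sA: "(\<Sum>z\<in>A. \<gamma>1 z) = q" unfolding A_def q_def by (rule B1(4))
    have sB: "(\<Sum>z\<in>B. \<gamma>2 z) = q" unfolding B_def q_def by (rule B2(4))
    have T1: "(\<Sum>z\<in>A. \<Sum>z'\<in>B. \<gamma>1 z * \<gamma>2 z' / q * X1 z) = (\<Sum>z\<in>A. \<gamma>1 z * X1 z)"
    proof -
      have "(\<Sum>z\<in>A. \<Sum>z'\<in>B. \<gamma>1 z * \<gamma>2 z' / q * X1 z) = (\<Sum>z\<in>A. (\<gamma>1 z * X1 z / q) * (\<Sum>z'\<in>B. \<gamma>2 z'))"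
        unfolding sum_distrib_left by (intro sum.cong refl) simp
      thus ?thesis using q sB by simp
    qed
    have T2: "(\<Sum>z\<in>A. \<Sum>z'\<in>B. \<gamma>1 z * \<gamma>2 z' / q * X2 z') = (\<Sum>z'\<in>B. \<gamma>2 z' * X2 z')"
    proof -
      have "(\<Sum>z\<in>A. \<Sum>z'\<in>B. \<gamma>1 z * \<gamma>2 z' / q * X2 z') = (\<Sum>z'\<in>B. \<Sum>z\<in>A. \<gamma>1 z * \<gamma>2 z' / q * X2 z')"
        by (rule sum.swap)
      also have "\<dots> = (\<Sum>z'\<in>B. (\<gamma>2 z' * X2 z' / q) * (\<Sum>z\<in>A. \<gamma>1 z))"
        unfolding sum_distrib_left by (intro sum.cong refl) simp
      finally show ?thesis using q sA by simp
    qed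
    have T3: "(\<Sum>z\<in>A. \<Sum>z'\<in>B. \<gamma>1 z * \<gamma>2 z' / q * (k * inner (snd z - y) (snd z' - y)))
        = k * (inner (U \<gamma>1 y) (U \<gamma>2 y) / q)"
    proof -
      have "inner (U \<gamma>1 y) (U \<gamma>2 y) = (\<Sum>z\<in>A. \<Sum>z'\<in>B. \<gamma>1 z * \<gamma>2 z' * inner (snd z - y) (snd z' - y))"
        unfolding U_def A_def[symmetric] B_def[symmetric] inner_sum_left inner_sum_right
        apply (simp add: mult_ac) by (rule sum.swap)
      thus ?thesis by (simp add: mult_ac sum_distrib_left sum_divide_distrib)
    qed
    have "(\<Sum>z\<in>A. \<Sum>z'\<in>B. \<gamma>1 z * \<gamma>2 z' / q * (X1 z + X2 z' - k * inner (snd z - y) (snd z' - y)))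
       = (\<Sum>z\<in>A. \<Sum>z'\<in>B. \<gamma>1 z * \<gamma>2 z' / q * X1 z)
         + (\<Sum>z\<in>A. \<Sum>z'\<in>B. \<gamma>1 z * \<gamma>2 z' / q * X2 z')
         - (\<Sum>z\<in>A. \<Sum>z'\<in>B. \<gamma>1 z * \<gamma>2 z' / q * (k * inner (snd z - y) (snd z' - y)))"
      by (simp add: ring_distribs sum.distrib sum_subtractf)
    thus ?thesis unfolding T1 T2 T3 by (simp add: A_def B_def q_def)
  qed
  have C1: "transport_cost p \<gamma>1 = (\<Sum>y\<in>Y. \<Sum>z\<in>fib \<gamma>1 y. \<gamma>1 z * X1 z)"
    unfolding transport_cost_def B1(6) Y_def X1_def by (simp add: norm_minus_commute)
  have C2: "transport_cost p \<gamma>2 = (\<Sum>y\<in>Y. \<Sum>z\<in>fib \<gamma>2 y. \<gamma>2 z * X2 z)"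
    unfolding transport_cost_def B2(6) Y_def X2_def by (simp add: norm_minus_commute)
  have "(\<Sum>y\<in>Y. \<Sum>z\<in>fib \<gamma>1 y. \<Sum>z'\<in>fib \<gamma>2 y.
       \<gamma>1 z * \<gamma>2 z' / \<nu> y * (X1 z + X2 z' - k * inner (snd z - y) (snd z' - y)))
     = (\<Sum>y\<in>Y. (\<Sum>z\<in>fib \<gamma>1 y. \<gamma>1 z * X1 z) + (\<Sum>z'\<in>fib \<gamma>2 y. \<gamma>2 z' * X2 z')
        - k * (inner (U \<gamma>1 y) (U \<gamma>2 y) / \<nu> y))"
    using E by (rule sum.cong[OF refl])
  also have "\<dots> = transport_cost p \<gamma>1 + transport_cost p \<gamma>2
           - cc p * (\<Sum>y\<in>supp \<nu>. inner (U \<gamma>1 y) (U \<gamma>2 y) / \<nu> y)"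
    unfolding C1 C2 k_def Y_def by (simp add: sum.distrib sum_subtractf sum_distrib_left)
  finally show ?thesis using step1 by simp
qed


lemma Gl_nn:
  assumes f: "fsprob \<nu>" and c1: "is_coupling \<nu> \<mu>1 \<gamma>1" and c2: "is_coupling \<nu> \<mu>2 \<gamma>2"
  shows "0 \<le> Gl p \<nu> \<gamma>1 \<gamma>2"
proof -
  have "0 \<le> \<nu> y" for y using f by (simp add: fsprob_def)
  thus ?thesis unfolding Gl_def using coup_nn[OF c1] coup_nn[OF c2]
    by (intro sum_nonneg mult_nonneg_nonneg divide_nonneg_nonneg) auto
qed

lemma Gl_sym: "Gl p \<nu> \<gamma>1 \<gamma>2 = Gl p \<nu> \<gamma>2 \<gamma>1"
  unfolding Gl_def
proof (rule sum.cong[OF refl])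
  fix y
  show "(\<Sum>z\<in>fib \<gamma>1 y. \<Sum>z'\<in>fib \<gamma>2 y. \<gamma>1 z * \<gamma>2 z' / \<nu> y * norm (snd z - snd z') ^ p) =
     (\<Sum>z\<in>fib \<gamma>2 y. \<Sum>z'\<in>fib \<gamma>1 y. \<gamma>2 z * \<gamma>1 z' / \<nu> y * norm (snd z - snd z') ^ p)"
    by (subst sum.swap) (simp add: norm_minus_commute mult_ac)
qed

lemma half_sum:
  fixes H :: "nat \<Rightarrow> nat \<Rightarrow> real"
  assumes sym: "\<And>i j. i \<in> K \<Longrightarrow> j \<in> K \<Longrightarrow> H i j = H j i"
    and nn: "\<And>i j. i \<in> K \<Longrightarrow> j \<in> K \<Longrightarrow> 0 \<le> H i j"
  shows "2 * (\<Sum>i\<in>K. \<Sum>j\<in>K. if i < j then H i j else 0) \<le> (\<Sum>i\<in>K. \<Sum>j\<in>K. H i j)"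
proof -
  have a: "(\<Sum>i\<in>K. \<Sum>j\<in>K. if j < i then H i j else 0) = (\<Sum>i\<in>K. \<Sum>j\<in>K. if i < j then H i j else 0)"
  proof -
    have "(\<Sum>i\<in>K. \<Sum>j\<in>K. if j < i then H i j else 0) = (\<Sum>j\<in>K. \<Sum>i\<in>K. if j < i then H i j else 0)"
      by (rule sum.swap)
    also have "\<dots> = (\<Sum>j\<in>K. \<Sum>i\<in>K. if j < i then H j i else 0)"
      using sym by (intro sum.cong refl) auto
    finally show ?thesis .
  qed
  have "(\<Sum>i\<in>K. \<Sum>j\<in>K. (if i < j then H i j else 0) + (if j < i then H i j else 0))
      \<le> (\<Sum>i\<in>K. \<Sum>j\<in>K. H i j)"
    using nn by (intro sum_mono) auto
  thus ?thesis using a by (simp add: sum.distrib)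
qed

lemma combine:
  fixes \<nu> :: "'a::real_inner \<Rightarrow> real" and \<gamma> :: "nat \<Rightarrow> ('a \<times> 'a \<Rightarrow> real)"
  assumes f: "fsprob \<nu>" and c: "\<And>i. i \<in> K \<Longrightarrow> is_coupling \<nu> (\<mu> i) (\<gamma> i)"
    and p: "p \<in> {1,2}" and lnn: "\<And>i. i \<in> K \<Longrightarrow> 0 \<le> lam i" and ls: "(\<Sum>i\<in>K. lam i) = 1"
  shows "(\<Sum>i\<in>K. \<Sum>j\<in>K. if i < j then lam i * lam j * Wpp p (\<mu> i) (\<mu> j) else 0)
         \<le> (\<Sum>i\<in>K. lam i * transport_cost p (\<gamma> i))"
proof -
  define G where "G i j = Gl p \<nu> (\<gamma> i) (\<gamma> j)" for i j
  define C where "C i = transport_cost p (\<gamma> i)" for i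
  define Y where "Y = supp \<nu>"
  have nu_nn: "0 \<le> \<nu> y" for y using f by (simp add: fsprob_def)
  have s1: "(\<Sum>i\<in>K. \<Sum>j\<in>K. if i < j then lam i * lam j * Wpp p (\<mu> i) (\<mu> j) else 0)
      \<le> (\<Sum>i\<in>K. \<Sum>j\<in>K. if i < j then lam i * lam j * G i j else 0)"
    unfolding G_def using glue[OF f c c] lnn
    by (intro sum_mono) (auto intro!: mult_left_mono)
  have s2: "2 * (\<Sum>i\<in>K. \<Sum>j\<in>K. if i < j then lam i * lam j * G i j else 0)
      \<le> (\<Sum>i\<in>K. \<Sum>j\<in>K. lam i * lam j * G i j)"
    by (rule half_sum) (auto simp: G_def Gl_sym[of p \<nu>] intro!: mult_nonneg_nonneg lnn Gl_nn[OF f c c])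
  define V where "V y = (\<Sum>i\<in>K. lam i *\<^sub>R U (\<gamma> i) y)" for y
  have s3: "(\<Sum>i\<in>K. \<Sum>j\<in>K. lam i * lam j * G i j)
      \<le> (\<Sum>i\<in>K. \<Sum>j\<in>K. lam i * lam j * (C i + C j - cc p * (\<Sum>y\<in>Y. inner (U (\<gamma> i) y) (U (\<gamma> j) y) / \<nu> y)))"
    unfolding G_def C_def Y_def using glue_bound[OF f c c p] lnn
    by (intro sum_mono mult_left_mono) (auto intro!: mult_nonneg_nonneg)
  have e1: "(\<Sum>i\<in>K. \<Sum>j\<in>K. lam i * lam j * C i) = (\<Sum>i\<in>K. lam i * C i)"
    by (simp add: sum_distrib_left[symmetric] sum_distrib_right[symmetric] ls mult_ac)
  have e2: "(\<Sum>i\<in>K. \<Sum>j\<in>K. lam i * lam j * C j) = (\<Sum>i\<in>K. lam i * C i)"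
    by (subst sum.swap) (simp add: sum_distrib_left[symmetric] sum_distrib_right[symmetric] ls mult_ac)
  have e3: "(\<Sum>i\<in>K. \<Sum>j\<in>K. lam i * lam j * (\<Sum>y\<in>Y. inner (U (\<gamma> i) y) (U (\<gamma> j) y) / \<nu> y))
      = (\<Sum>y\<in>Y. inner (V y) (V y) / \<nu> y)"
  proof -
    have "(\<Sum>i\<in>K. \<Sum>j\<in>K. lam i * lam j * (\<Sum>y\<in>Y. inner (U (\<gamma> i) y) (U (\<gamma> j) y) / \<nu> y))
        = (\<Sum>i\<in>K. \<Sum>j\<in>K. \<Sum>y\<in>Y. lam i * lam j * inner (U (\<gamma> i) y) (U (\<gamma> j) y) / \<nu> y)"
      by (simp add: sum_distrib_left)
    also have "\<dots> = (\<Sum>y\<in>Y. \<Sum>i\<in>K. \<Sum>j\<in>K. lam i * lam j * inner (U (\<gamma> i) y) (U (\<gamma> j) y) / \<nu> y)"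
      by (subst sum.swap, rule sum.cong[OF refl], subst sum.swap, rule refl)
    also have "\<dots> = (\<Sum>y\<in>Y. inner (V y) (V y) / \<nu> y)"
      unfolding V_def inner_sum_left inner_sum_right sum_divide_distrib
      apply (simp add: mult_ac) apply (rule sum.cong[OF refl]) apply (subst sum.swap) by (simp add: mult_ac)
    finally show ?thesis .
  qed
  have e4: "0 \<le> (\<Sum>y\<in>Y. inner (V y) (V y) / \<nu> y)"
    using nu_nn by (intro sum_nonneg divide_nonneg_nonneg) auto
  have cc0: "0 \<le> cc p" by (simp add: cc_def)
  have "(\<Sum>i\<in>K. \<Sum>j\<in>K. lam i * lam j * (C i + C j - cc p * (\<Sum>y\<in>Y. inner (U (\<gamma> i) y) (U (\<gamma> j) y) / \<nu> y)))
      = (\<Sum>i\<in>K. \<Sum>j\<in>K. lam i * lam j * C i) + (\<Sum>i\<in>K. \<Sum>j\<in>K. lam i * lam j * C j)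
        - cc p * (\<Sum>i\<in>K. \<Sum>j\<in>K. lam i * lam j * (\<Sum>y\<in>Y. inner (U (\<gamma> i) y) (U (\<gamma> j) y) / \<nu> y))"
    by (simp add: ring_distribs sum.distrib sum_subtractf sum_distrib_left mult_ac)
  also have "\<dots> \<le> 2 * (\<Sum>i\<in>K. lam i * C i)"
    unfolding e1 e2 e3 using e4 cc0 by (simp add: mult_nonneg_nonneg)
  finally show ?thesis using s1 s2 s3 unfolding C_def by linarith
qed


lemma prod_coupling:
  fixes \<nu> :: "'a::real_normed_vector \<Rightarrow> real"
  assumes f: "fsprob \<nu>" and wn: "\<forall>k\<in>{1..nn}. 0 \<le> ww k" and ws: "(\<Sum>k\<in>{1..nn}. ww k) = 1"
  shows "\<exists>\<gamma>. is_coupling \<nu> (dmeas nn ww xx) \<gamma>"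
proof -
  define Y where "Y = supp \<nu>"
  have finY: "finite Y" using f by (simp add: fsprob_def Y_def)
  have nu_nn: "0 \<le> \<nu> y" for y using f by (simp add: fsprob_def)
  have sY: "(\<Sum>y\<in>Y. \<nu> y) = 1" using f by (simp add: fsprob_def Y_def)
  define I where "I = Y \<times> {1..nn}"
  define g where "g = (\<lambda>t::'a \<times> nat. \<nu> (fst t) * ww (snd t))"
  define f1 where "f1 = (\<lambda>t::'a \<times> nat. fst t)"
  define f2 where "f2 = (\<lambda>t::'a \<times> nat. xx (snd t))"
  have finI: "finite I" using finY by (simp add: I_def)
  have nn: "\<forall>t\<in>I. 0 \<le> g t" using wn nu_nn by (auto simp: I_def g_def)
  have S2: "\<And>F. (\<Sum>t\<in>I. F t) = (\<Sum>y\<in>Y. \<Sum>k\<in>{1..nn}. F (y,k))"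
    unfolding I_def by (simp add: sum.cartesian_product)
  have M1: "(\<lambda>a. \<Sum>t\<in>I. if f1 t = a then g t else 0) = \<nu>"
  proof
    fix a
    have "(\<Sum>t\<in>I. if f1 t = a then g t else 0) = (\<Sum>y\<in>Y. if y = a then \<nu> y * (\<Sum>k\<in>{1..nn}. ww k) else 0)"
      unfolding S2 f1_def g_def by (intro sum.cong refl) (auto simp: sum_distrib_left)
    also have "\<dots> = \<nu> a" using finY ws by (simp add: sum.delta' Y_def supp_def)
    finally show "(\<Sum>t\<in>I. if f1 t = a then g t else 0) = \<nu> a" .
  qed
  have M2: "(\<lambda>a. \<Sum>t\<in>I. if f2 t = a then g t else 0) = dmeas nn ww xx"
  proof
    fix a
    have "(\<Sum>t\<in>I. if f2 t = a then g t else 0) = (\<Sum>y\<in>Y. \<nu> y * dmeas nn ww xx a)"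
      unfolding S2 f2_def g_def dmeas_def sum_distrib_left by (intro sum.cong refl) auto
    also have "\<dots> = dmeas nn ww xx a" using sY by (simp add: sum_distrib_right[symmetric])
    finally show "(\<Sum>t\<in>I. if f2 t = a then g t else 0) = dmeas nn ww xx a" .
  qed
  show ?thesis using gen_coupling(1)[OF finI nn, of f1 f2] unfolding M1 M2 by blast
qed

lemma lower:
  fixes \<nu> :: "'a::real_inner \<Rightarrow> real" and K :: "nat set"
  assumes f: "fsprob \<nu>" and c: "\<And>i. i \<in> K \<Longrightarrow> \<exists>\<gamma>. is_coupling \<nu> (\<mu> i) \<gamma>"
    and p: "p \<in> {1,2}" and lnn: "\<And>i. i \<in> K \<Longrightarrow> 0 \<le> lam i" and ls: "(\<Sum>i\<in>K. lam i) = 1"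
  shows "(\<Sum>i\<in>K. \<Sum>j\<in>K. if i < j then lam i * lam j * Wpp p (\<mu> i) (\<mu> j) else 0)
         \<le> (\<Sum>i\<in>K. lam i * Wpp p \<nu> (\<mu> i))"
proof (rule field_le_epsilon)
  fix e :: real assume e: "0 < e"
  have "\<forall>i\<in>K. \<exists>\<gamma>. is_coupling \<nu> (\<mu> i) \<gamma> \<and> transport_cost p \<gamma> < Wpp p \<nu> (\<mu> i) + e"
  proof
    fix i assume i: "i \<in> K"
    let ?S = "{transport_cost p \<gamma> | \<gamma>. is_coupling \<nu> (\<mu> i) \<gamma>}"
    have ne: "?S \<noteq> {}" using c[OF i] by auto
    have "Inf ?S < Wpp p \<nu> (\<mu> i) + e" using e by (simp add: Wpp_def)
    from cInf_lessD[OF ne this] show "\<exists>\<gamma>. is_coupling \<nu> (\<mu> i) \<gamma> \<and> transport_cost p \<gamma> < Wpp p \<nu> (\<mu> i) + e"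
      by auto
  qed
  then obtain \<gamma> where g: "\<forall>i\<in>K. is_coupling \<nu> (\<mu> i) (\<gamma> i) \<and> transport_cost p (\<gamma> i) < Wpp p \<nu> (\<mu> i) + e"
    by (metis bchoice)
  have "(\<Sum>i\<in>K. \<Sum>j\<in>K. if i < j then lam i * lam j * Wpp p (\<mu> i) (\<mu> j) else 0)
         \<le> (\<Sum>i\<in>K. lam i * transport_cost p (\<gamma> i))"
    by (rule combine[where \<gamma>=\<gamma>]) (use f p lnn ls g in auto)
  also have "\<dots> \<le> (\<Sum>i\<in>K. lam i * (Wpp p \<nu> (\<mu> i) + e))"
    using g lnn by (intro sum_mono mult_left_mono) (auto intro: less_imp_le)
  also have "\<dots> = (\<Sum>i\<in>K. lam i * Wpp p \<nu> (\<mu> i)) + e"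
    using ls by (simp add: distrib_left sum.distrib sum_distrib_right[symmetric])
  finally show "(\<Sum>i\<in>K. \<Sum>j\<in>K. if i < j then lam i * lam j * Wpp p (\<mu> i) (\<mu> j) else 0)
         \<le> (\<Sum>i\<in>K. lam i * Wpp p \<nu> (\<mu> i)) + e" .
qed


lemma upper_j:
  fixes m x :: "nat \<Rightarrow> nat \<Rightarrow> 'a::real_normed_vector"
  assumes pn: "\<forall>i\<in>K. \<forall>k\<in>{1..n i}. \<forall>l\<in>{1..n j}. 0 \<le> PP i j k l"
    and m1: "\<forall>i\<in>K. \<forall>k\<in>{1..n i}. (\<Sum>l\<in>{1..n j}. PP i j k l) = w i k"
    and m2: "\<forall>i\<in>K. \<forall>l\<in>{1..n j}. (\<Sum>k\<in>{1..n i}. PP i j k l) = w j l"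
    and lnn: "\<forall>i\<in>K. 0 \<le> lam i" and ls: "(\<Sum>i\<in>K. lam i) = 1" and finK: "finite K"
  shows "Wpp p (\<lambda>y. \<Sum>i\<in>K. lam i * dmeas (n i) (w i) (m i) y) (dmeas (n j) (w j) (x j))
     \<le> (\<Sum>i\<in>K. lam i * (\<Sum>k\<in>{1..n i}. \<Sum>l\<in>{1..n j}. PP i j k l * norm (m i k - x j l) ^ p))"
proof -
  define I where "I = (SIGMA i:K. {1..n i} \<times> {1..n j})"
  define g where "g = (\<lambda>t::nat \<times> nat \<times> nat. lam (fst t) * PP (fst t) j (fst (snd t)) (snd (snd t)))"
  define f1 where "f1 = (\<lambda>t::nat \<times> nat \<times> nat. m (fst t) (fst (snd t)))"
  define f2 where "f2 = (\<lambda>t::nat \<times> nat \<times> nat. x j (snd (snd t)))"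
  have finI: "finite I" using finK by (simp add: I_def)
  have S3: "\<And>F. (\<Sum>t\<in>I. F t) = (\<Sum>i\<in>K. \<Sum>k\<in>{1..n i}. \<Sum>l\<in>{1..n j}. F (i,(k,l)))"
    unfolding I_def by (rule sum_sigma3) (use finK in auto)
  have nn: "\<forall>t\<in>I. 0 \<le> g t" using pn lnn by (auto simp: I_def g_def)
  have M1: "(\<lambda>a. \<Sum>t\<in>I. if f1 t = a then g t else 0) = (\<lambda>y. \<Sum>i\<in>K. lam i * dmeas (n i) (w i) (m i) y)"
  proof
    fix a
    have "(\<Sum>t\<in>I. if f1 t = a then g t else 0)
        = (\<Sum>i\<in>K. lam i * (\<Sum>k\<in>{1..n i}. if m i k = a then (\<Sum>l\<in>{1..n j}. PP i j k l) else 0))"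
      unfolding S3 f1_def g_def sum_distrib_left by (intro sum.cong refl) (auto simp: sum_distrib_left)
    also have "\<dots> = (\<Sum>i\<in>K. lam i * dmeas (n i) (w i) (m i) a)"
      unfolding dmeas_def using m1 by (intro sum.cong refl arg_cong2[where f="(*)"]) auto
    finally show "(\<Sum>t\<in>I. if f1 t = a then g t else 0) = (\<Sum>i\<in>K. lam i * dmeas (n i) (w i) (m i) a)" .
  qed
  have M2: "(\<lambda>a. \<Sum>t\<in>I. if f2 t = a then g t else 0) = dmeas (n j) (w j) (x j)"
  proof
    fix a
    have "(\<Sum>t\<in>I. if f2 t = a then g t else 0)
        = (\<Sum>i\<in>K. \<Sum>k\<in>{1..n i}. \<Sum>l\<in>{1..n j}. lam i * (if x j l = a then PP i j k l else 0))"
      unfolding S3 f2_def g_def by (intro sum.cong refl) auto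
    also have "\<dots> = (\<Sum>i\<in>K. lam i * (\<Sum>l\<in>{1..n j}. \<Sum>k\<in>{1..n i}. (if x j l = a then PP i j k l else 0)))"
      by (rule sum.cong[OF refl], rule trans[OF sum.swap]) (simp add: sum_distrib_left)
    also have "\<dots> = (\<Sum>i\<in>K. lam i * dmeas (n j) (w j) (x j) a)"
      unfolding dmeas_def using m2 by (intro sum.cong refl arg_cong2[where f="(*)"]) (auto simp: sum.If_cases)
    also have "\<dots> = dmeas (n j) (w j) (x j) a" using ls by (simp add: sum_distrib_right[symmetric])
    finally show "(\<Sum>t\<in>I. if f2 t = a then g t else 0) = dmeas (n j) (w j) (x j) a" .
  qed
  have "Wpp p (\<lambda>y. \<Sum>i\<in>K. lam i * dmeas (n i) (w i) (m i) y) (dmeas (n j) (w j) (x j))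
      \<le> transport_cost p (\<lambda>z. \<Sum>t\<in>I. if (f1 t, f2 t) = z then g t else 0)"
    using Wpp_le gen_coupling(1)[OF finI nn, of f1 f2] unfolding M1 M2 by blast
  also have "\<dots> = (\<Sum>t\<in>I. g t * norm (f1 t - f2 t) ^ p)" by (rule gen_coupling(2)[OF finI nn])
  also have "\<dots> = (\<Sum>i\<in>K. lam i * (\<Sum>k\<in>{1..n i}. \<Sum>l\<in>{1..n j}. PP i j k l * norm (m i k - x j l) ^ p))"
    unfolding S3 f1_def f2_def g_def sum_distrib_left by (intro sum.cong refl) (auto simp: mult_ac)
  finally show ?thesis .
qed

lemma W_zero_eq:
  fixes X Y :: "nat \<Rightarrow> 'a::real_normed_vector"
  assumes pn: "\<forall>k\<in>{1..a}. \<forall>l\<in>{1..b}. 0 \<le> P k l"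
    and m1: "\<forall>k\<in>{1..a}. (\<Sum>l\<in>{1..b}. P k l) = wa k"
    and m2: "\<forall>l\<in>{1..b}. (\<Sum>k\<in>{1..a}. P k l) = wb l"
    and z: "(\<Sum>k\<in>{1..a}. \<Sum>l\<in>{1..b}. P k l * norm (X k - Y l) ^ p) = 0" and p: "p \<noteq> 0"
  shows "dmeas a wa X = dmeas b wb Y"
proof
  fix c
  have z2: "\<forall>k\<in>{1..a}. \<forall>l\<in>{1..b}. P k l * norm (X k - Y l) ^ p = 0"
  proof -
    have inn: "\<forall>k\<in>{1..a}. \<forall>l\<in>{1..b}. 0 \<le> P k l * norm (X k - Y l) ^ p"
      using pn by (intro ballI mult_nonneg_nonneg) auto
    have inner_nn: "\<forall>k\<in>{1..a}. 0 \<le> (\<Sum>l\<in>{1..b}. P k l * norm (X k - Y l) ^ p)"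
      using inn by (intro ballI sum_nonneg) auto
    have "(\<Sum>k\<in>{1..a}. \<Sum>l\<in>{1..b}. P k l * norm (X k - Y l) ^ p) = 0 \<longleftrightarrow>
       (\<forall>k\<in>{1..a}. (\<Sum>l\<in>{1..b}. P k l * norm (X k - Y l) ^ p) = 0)"
      by (rule sum_nonneg_eq_0_iff) (use inner_nn in auto)
    hence h1: "\<forall>k\<in>{1..a}. (\<Sum>l\<in>{1..b}. P k l * norm (X k - Y l) ^ p) = 0" using z by blast
    show ?thesis
    proof (intro ballI)
      fix k l assume k: "k \<in> {1..a}" and l: "l \<in> {1..b}"
      have "(\<Sum>l\<in>{1..b}. P k l * norm (X k - Y l) ^ p) = 0 \<longleftrightarrow>
         (\<forall>l\<in>{1..b}. P k l * norm (X k - Y l) ^ p = 0)"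
        by (rule sum_nonneg_eq_0_iff) (use inn k in auto)
      thus "P k l * norm (X k - Y l) ^ p = 0" using h1 k l by blast
    qed
  qed
  have eq: "(if X k = c then P k l else 0) = (if Y l = c then P k l else 0)" if "k \<in> {1..a}" "l \<in> {1..b}" for k l
  proof (cases "P k l = 0")
    case False
    have "P k l * norm (X k - Y l) ^ p = 0" using z2 that by blast
    hence "norm (X k - Y l) ^ p = 0" using False by simp
    hence "X k = Y l" using p by simp
    thus ?thesis by simp
  qed simp
  have "dmeas a wa X c = (\<Sum>k\<in>{1..a}. \<Sum>l\<in>{1..b}. if X k = c then P k l else 0)"
    unfolding dmeas_def using m1 by (intro sum.cong refl) (auto simp: sum.If_cases)
  also have "\<dots> = (\<Sum>k\<in>{1..a}. \<Sum>l\<in>{1..b}. if Y l = c then P k l else 0)"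
    using eq by (intro sum.cong refl) auto
  also have "\<dots> = (\<Sum>l\<in>{1..b}. \<Sum>k\<in>{1..a}. if Y l = c then P k l else 0)" by (rule sum.swap)
  also have "\<dots> = dmeas b wb Y c"
    unfolding dmeas_def using m2 by (intro sum.cong refl) (auto simp: sum.If_cases)
  finally show "dmeas a wa X c = dmeas b wb Y c" .
qed


theorem mainTheorem6:
  fixes p N :: nat
    and lam :: "nat \<Rightarrow> real"
    and n :: "nat \<Rightarrow> nat"
    and w :: "nat \<Rightarrow> nat \<Rightarrow> real"
    and x m :: "nat \<Rightarrow> nat \<Rightarrow> 'a::euclidean_space"
    and pi :: "nat \<Rightarrow> nat \<Rightarrow> nat \<Rightarrow> nat \<Rightarrow> real"
    and \<nu>hat :: "'a \<Rightarrow> real"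
  assumes p: "p \<in> {1, 2}"
    and N: "N \<ge> 2"
    and lam_pos: "\<forall>i\<in>{1..N}. 0 < lam i"
    and lam_sum: "(\<Sum>i\<in>{1..N}. lam i) = 1"
    and w_pos: "\<forall>i\<in>{1..N}. \<forall>k\<in>{1..n i}. 0 < w i k"
    and w_sum: "\<forall>i\<in>{1..N}. (\<Sum>k\<in>{1..n i}. w i k) = 1"
    and x_inj: "\<forall>i\<in>{1..N}. inj_on (x i) {1..n i}"
    and not_all_eq: "\<exists>i\<in>{1..N}. \<exists>j\<in>{1..N}. dmeas (n i) (w i) (x i) \<noteq> dmeas (n j) (w j) (x j)"
    and pi_diag: "\<forall>i\<in>{1..N}. \<forall>k\<in>{1..n i}. \<forall>l\<in>{1..n i}. pi i i k l = (if l = k then w i k else 0)"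
    and pi_nonneg: "\<forall>i\<in>{1..N}. \<forall>j\<in>{1..N}. i < j \<longrightarrow>
         (\<forall>k\<in>{1..n i}. \<forall>l\<in>{1..n j}. 0 \<le> pi i j k l)"
    and pi_marg1: "\<forall>i\<in>{1..N}. \<forall>j\<in>{1..N}. i < j \<longrightarrow>
         (\<forall>k\<in>{1..n i}. (\<Sum>l\<in>{1..n j}. pi i j k l) = w i k)"
    and pi_marg2: "\<forall>i\<in>{1..N}. \<forall>j\<in>{1..N}. i < j \<longrightarrow>
         (\<forall>l\<in>{1..n j}. (\<Sum>k\<in>{1..n i}. pi i j k l) = w j l)"
    and pi_opt: "\<forall>i\<in>{1..N}. \<forall>j\<in>{1..N}. i < j \<longrightarrow>
         (\<Sum>k\<in>{1..n i}. \<Sum>l\<in>{1..n j}. pi i j k l * norm (x i k - x j l) ^ p)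
           = Wpp p (dmeas (n i) (w i) (x i)) (dmeas (n j) (w j) (x j))"
    and pi_sym: "\<forall>i\<in>{1..N}. \<forall>j\<in>{1..N}. j < i \<longrightarrow>
         (\<forall>l\<in>{1..n i}. \<forall>k\<in>{1..n j}. pi i j l k = pi j i k l)"
    and nuhat_prob: "fsprob \<nu>hat"
    and nuhat_opt: "\<forall>\<nu>. fsprob \<nu> \<longrightarrow>
         Psi p N lam (\<lambda>i. dmeas (n i) (w i) (x i)) \<nu>hat \<le> Psi p N lam (\<lambda>i. dmeas (n i) (w i) (x i)) \<nu>"
  shows "Psi p N lam (\<lambda>i. dmeas (n i) (w i) (x i))
            (\<lambda>y. \<Sum>i\<in>{1..N}. lam i * dmeas (n i) (w i) (m i) y)
          / Psi p N lam (\<lambda>i. dmeas (n i) (w i) (x i)) \<nu>hat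
         \<le> (\<Sum>i\<in>{1..N}. lam i * (\<Sum>j\<in>{1..N}. lam j *
               (\<Sum>k\<in>{1..n i}. \<Sum>l\<in>{1..n j}. pi i j k l * norm (m i k - x j l) ^ p)))
          / (\<Sum>i\<in>{1..N}. \<Sum>j\<in>{1..N}. if i < j then lam i * lam j *
               Wpp p (dmeas (n i) (w i) (x i)) (dmeas (n j) (w j) (x j)) else 0)"
proof -
  let ?K = "{1..N}"
  let ?a = "Psi p N lam (\<lambda>i. dmeas (n i) (w i) (x i))
            (\<lambda>y. \<Sum>i\<in>{1..N}. lam i * dmeas (n i) (w i) (m i) y)"
  let ?b = "Psi p N lam (\<lambda>i. dmeas (n i) (w i) (x i)) \<nu>hat"
  let ?c = "(\<Sum>i\<in>{1..N}. lam i * (\<Sum>j\<in>{1..N}. lam j *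
               (\<Sum>k\<in>{1..n i}. \<Sum>l\<in>{1..n j}. pi i j k l * norm (m i k - x j l) ^ p)))"
  let ?d = "(\<Sum>i\<in>{1..N}. \<Sum>j\<in>{1..N}. if i < j then lam i * lam j *
               Wpp p (dmeas (n i) (w i) (x i)) (dmeas (n j) (w j) (x j)) else 0)"
  have lnn: "\<And>i. i \<in> ?K \<Longrightarrow> 0 \<le> lam i" using lam_pos by (auto intro: less_imp_le)
  have Pnn: "0 \<le> pi i j k l" if "i\<in>?K" "j\<in>?K" "k\<in>{1..n i}" "l\<in>{1..n j}" for i j k l
  proof -
    consider "i<j" | "i=j" | "j<i" by arith
    then show ?thesis
    proof cases
      case 1 show ?thesis using pi_nonneg[rule_format, OF that(1) that(2) 1 that(3) that(4)] .
    next
      case 2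
      have "pi i j k l = (if l = k then w i k else 0)"
        using pi_diag[rule_format, OF that(1) that(3)] that(4) 2 by simp
      moreover have "0 < w i k" using w_pos[rule_format, OF that(1) that(3)] .
      ultimately show ?thesis by simp
    next
      case 3
      have "pi i j k l = pi j i l k" using pi_sym[rule_format, OF that(1) that(2) 3 that(3) that(4)] .
      thus ?thesis using pi_nonneg[rule_format, OF that(2) that(1) 3 that(4) that(3)] by simp
    qed
  qed
  have Pm1: "(\<Sum>l\<in>{1..n j}. pi i j k l) = w i k" if "i\<in>?K" "j\<in>?K" "k\<in>{1..n i}" for i j k
  proof -
    consider "i<j" | "i=j" | "j<i" by arith
    then show ?thesis
    proof cases
      case 1 show ?thesis using pi_marg1[rule_format, OF that(1) that(2) 1 that(3)] .
    next
      case 2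
      have "(\<Sum>l\<in>{1..n j}. pi i j k l) = (\<Sum>l\<in>{1..n i}. if l = k then w i k else 0)"
        using pi_diag[rule_format, OF that(1) that(3)] 2 by (intro sum.cong) auto
      thus ?thesis using that by simp
    next
      case 3
      have "(\<Sum>l\<in>{1..n j}. pi i j k l) = (\<Sum>l\<in>{1..n j}. pi j i l k)"
        using pi_sym[rule_format, OF that(1) that(2) 3 that(3)] by (intro sum.cong) auto
      thus ?thesis using pi_marg2[rule_format, OF that(2) that(1) 3 that(3)] by simp
    qed
  qed
  have Pm2: "(\<Sum>k\<in>{1..n i}. pi i j k l) = w j l" if "i\<in>?K" "j\<in>?K" "l\<in>{1..n j}" for i j l
  proof -
    consider "i<j" | "i=j" | "j<i" by arith
    then show ?thesis
    proof cases
      case 1 show ?thesis using pi_marg2[rule_format, OF that(1) that(2) 1 that(3)] .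
    next
      case 2
      have "(\<Sum>k\<in>{1..n i}. pi i j k l) = (\<Sum>k\<in>{1..n i}. if l = k then w i k else 0)"
        using pi_diag[rule_format, OF that(1)] that(3) 2 by (intro sum.cong) auto
      thus ?thesis using that 2 by simp
    next
      case 3
      have "(\<Sum>k\<in>{1..n i}. pi i j k l) = (\<Sum>k\<in>{1..n i}. pi j i l k)"
        using pi_sym[rule_format, OF that(1) that(2) 3] that(3) by (intro sum.cong) auto
      thus ?thesis using pi_marg1[rule_format, OF that(2) that(1) 3 that(3)] by simp
    qed
  qed
  define A where "A i j = (\<Sum>k\<in>{1..n i}. \<Sum>l\<in>{1..n j}. pi i j k l * norm (m i k - x j l) ^ p)" for i j
  have UB: "?a \<le> ?c"
  proof -
    have "?a \<le> (\<Sum>j\<in>?K. lam j * (\<Sum>i\<in>?K. lam i * A i j))"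
      unfolding Psi_def A_def
    proof (intro sum_mono mult_left_mono)
      fix j assume j: "j \<in> ?K"
      show "0 \<le> lam j" using lnn j .
      show "Wpp p (\<lambda>y. \<Sum>i\<in>{1..N}. lam i * dmeas (n i) (w i) (m i) y) (dmeas (n j) (w j) (x j))
        \<le> (\<Sum>i\<in>?K. lam i * (\<Sum>k\<in>{1..n i}. \<Sum>l\<in>{1..n j}. pi i j k l * norm (m i k - x j l) ^ p))"
        by (rule upper_j) (use Pnn[OF _ j] Pm1[OF _ j] Pm2[OF _ j] lnn lam_sum in auto)
    qed
    also have "\<dots> = ?c" unfolding A_def[symmetric] sum_distrib_left
      by (subst sum.swap) (simp add: mult_ac)
    finally show ?thesis .
  qed
  have LB: "?d \<le> ?b"
    unfolding Psi_def
    by (rule lower[OF nuhat_prob _ p lnn lam_sum], rule prod_coupling[OF nuhat_prob])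
       (use w_pos w_sum in \<open>auto intro: less_imp_le\<close>)
  have Wnn: "0 \<le> Wpp p (dmeas (n i) (w i) (x i)) (dmeas (n j) (w j) (x j))"
    if "i\<in>?K" "j\<in>?K" "i<j" for i j
  proof -
    have "0 \<le> (\<Sum>k\<in>{1..n i}. \<Sum>l\<in>{1..n j}. pi i j k l * norm (x i k - x j l) ^ p)"
      using Pnn[OF that(1) that(2)] by (intro sum_nonneg mult_nonneg_nonneg) auto
    thus ?thesis using pi_opt[rule_format, OF that] by simp
  qed
  have Dpos: "0 < ?d"
  proof -
    obtain a b where ab: "a \<in> ?K" "b \<in> ?K" "a < b"
      "dmeas (n a) (w a) (x a) \<noteq> dmeas (n b) (w b) (x b)"
    proof -
      obtain i j where ij: "i \<in> ?K" "j \<in> ?K" "dmeas (n i) (w i) (x i) \<noteq> dmeas (n j) (w j) (x j)"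
        using not_all_eq by blast
      hence "i < j \<or> j < i" by (metis linorder_neqE_nat)
      thus ?thesis using ij that by metis
    qed
    have Wab: "(\<Sum>k\<in>{1..n a}. \<Sum>l\<in>{1..n b}. pi a b k l * norm (x a k - x b l) ^ p)
       = Wpp p (dmeas (n a) (w a) (x a)) (dmeas (n b) (w b) (x b))" using pi_opt[rule_format, OF ab(1-3)] .
    have p0: "p \<noteq> 0" using p by auto
    have "Wpp p (dmeas (n a) (w a) (x a)) (dmeas (n b) (w b) (x b)) \<noteq> 0"
    proof
      assume "Wpp p (dmeas (n a) (w a) (x a)) (dmeas (n b) (w b) (x b)) = 0"
      hence "dmeas (n a) (w a) (x a) = dmeas (n b) (w b) (x b)"
        using Wab Pnn[OF ab(1) ab(2)] Pm1[OF ab(1) ab(2)] Pm2[OF ab(1) ab(2)]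
        by (intro W_zero_eq[OF _ _ _ _ p0, where P="pi a b"]) auto
      thus False using ab by blast
    qed
    hence Wpos: "0 < Wpp p (dmeas (n a) (w a) (x a)) (dmeas (n b) (w b) (x b))"
      using Wnn[OF ab(1-3)] by linarith
    define T where "T i j = (if i < j then lam i * lam j *
               Wpp p (dmeas (n i) (w i) (x i)) (dmeas (n j) (w j) (x j)) else 0)" for i j
    have Tnn: "0 \<le> T i j" if "i\<in>?K" "j\<in>?K" for i j
      unfolding T_def using Wnn that lnn by (auto intro!: mult_nonneg_nonneg)
    have "0 < T a b" unfolding T_def using ab Wpos lam_pos by auto
    also have "T a b \<le> (\<Sum>j\<in>?K. T a j)" by (rule member_le_sum) (use ab Tnn in auto)
    also have "\<dots> \<le> (\<Sum>i\<in>?K. \<Sum>j\<in>?K. T i j)" 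
      by (rule member_le_sum[where f="\<lambda>i. \<Sum>j\<in>?K. T i j"]) (use ab Tnn in \<open>auto intro: sum_nonneg\<close>)
    finally show ?thesis unfolding T_def .
  qed
  have cnn: "0 \<le> ?c"
    using Pnn lnn by (intro sum_nonneg mult_nonneg_nonneg) auto
  have "?a / ?b \<le> ?c / ?b" using UB LB Dpos by (intro divide_right_mono) auto
  also have "\<dots> \<le> ?c / ?d" using LB Dpos cnn by (intro divide_left_mono) auto
  finally show ?thesis .
qed

end
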